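(* The following weakening rules are admissible in $\mathsf{G}(\mathbf{KT}^+_D)$: for all finite multisets $\Gamma,\Delta$ of formulas, every finite multiset $\Sigma$ of outmost-boxed formulas, every formula $\alpha$ and every $G\in\mathsf{Grp}$, if $\vdash\Sigma\mid\Gamma\Rightarrow\Delta$ then $\vdash\Sigma\mid\Gamma\Rightarrow\Delta,\alpha$, $\vdash\Sigma\mid\alpha,\Gamma\Rightarrow\Delta$, and $\vdash\Sigma,D_G\alpha\mid\Gamma\Rightarrow\Delta$.
   Context: Language: fix a finite nonempty set $\mathsf{Agt}$ of agents and a countable set $\mathsf{Prop}$ of propositional variables; $\mathsf{Grp}$ is the set of nonempty subsets of $\mathsf{Agt}$. Formulas: $\alpha::=p\mid\bot\mid\alpha\wedge\alpha\mid\alpha\vee\alpha\mid\alpha\rightarrow\alpha\mid\neg\alpha\mid D_G\alpha$ ($p\in\mathsf{Prop}$, $G\in\mathsf{Grp}$). Outmost-boxed formula: one of the form $D_G\gamma$. Calculus $\mathsf{G}(\mathbf{KT}^+_D)$ ($\vdash$ denotes derivability: root of a finite tree built from initial sequents by the rules): a T-sequent $\Sigma\mid\Gamma\Rightarrow\Delta$ consists of finite multisets $\Gamma,\Delta$ of formulas and a finite multiset $\Sigma$ of outmost-boxed formulas. Initial sequents: $\Sigma\mid\Gamma,p\Rightarrow p,\Delta$ ($p\in\mathsf{Prop}$) and $\Sigma\mid\bot,\Gamma\Rightarrow\Delta$. Propositional rules (with $\Sigma$ unchanged): $(R\wedge)$ from $\Sigma\mid\Gamma\Rightarrow\Delta,\alpha_1$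 and $\Sigma\mid\Gamma\Rightarrow\Delta,\alpha_2$ infer $\Sigma\mid\Gamma\Rightarrow\Delta,\alpha_1\wedge\alpha_2$; $(L\wedge)$ from $\Sigma\mid\alpha_1,\alpha_2,\Gamma\Rightarrow\Delta$ infer $\Sigma\mid\alpha_1\wedge\alpha_2,\Gamma\Rightarrow\Delta$; $(R\vee)$ from $\Sigma\mid\Gamma\Rightarrow\Delta,\alpha_1,\alpha_2$ infer $\Sigma\mid\Gamma\Rightarrow\Delta,\alpha_1\vee\alpha_2$; $(L\vee)$ from $\Sigma\mid\alpha_1,\Gamma\Rightarrow\Delta$ and $\Sigma\mid\alpha_2,\Gamma\Rightarrow\Delta$ infer $\Sigma\mid\alpha_1\vee\alpha_2,\Gamma\Rightarrow\Delta$; $(R\rightarrow)$ from $\Sigma\mid\alpha_1,\Gamma\Rightarrow\Delta,\alpha_2$ infer $\Sigma\mid\Gamma\Rightarrow\Delta,\alpha_1\rightarrow\alpha_2$; $(L\rightarrow)$ from $\Sigma\mid\Gamma\Rightarrow\Delta,\alpha_1$ and $\Sigma\mid\alpha_2,\Gamma\Rightarrow\Delta$ infer $\Sigma\mid\alpha_1\rightarrow\alpha_2,\Gamma\Rightarrow\Delta$; $(R\neg)$ from $\Sigma\mid\alpha,\Gamma\Rightarrow\Delta$ infer $\Sigma\mid\Gamma\Rightarrow\Delta,\neg\alpha$; $(L\neg)$ from $\Sigma\mid\Gamma\Rightarrow\Delta,\alpha$ infer $\Sigma\mid\neg\alpha,\Gamma\Rightarrow\Delta$. Modal rules: $(D_K^+)$: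 from $\emptyset\mid\alpha_1,\dots,\alpha_n\Rightarrow\beta$ ($n\ge0$) infer $\Sigma,D_{G_1}\alpha_1,\dots,D_{G_n}\alpha_n\mid\Pi\Rightarrow D_G\beta,\Omega$, provided $G_i\subseteq G$ for all $i$, $\Sigma$ consists only of formulas $D_H\gamma$ with $H\not\subseteq G$, $\Pi$ only of propositional variables and $\bot$, and $\Omega$ only of propositional variables, $\bot$ and outmost-boxed formulas; $(D_T^+)$: from $D_G\alpha,\Sigma\mid\Gamma,\alpha\Rightarrow\Delta$ infer $\Sigma\mid\Gamma,D_G\alpha\Rightarrow\Delta$. *)

theory Defs
  imports Main "HOL-Library.Multiset"
begin

text \<open>Agents: a finite nonempty type 'a (types are nonempty). Propositional variables: type 'p
(countable). Groups: nonempty sets of agents.\<close>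

datatype ('a, 'p) fm =
    Atom 'p
  | Bot
  | And "('a, 'p) fm" "('a, 'p) fm"
  | Or "('a, 'p) fm" "('a, 'p) fm"
  | Imp "('a, 'p) fm" "('a, 'p) fm"
  | Neg "('a, 'p) fm"
  | Dbox "'a set" "('a, 'p) fm"

definition Grp :: "'a set set" where
  "Grp = {G. G \<noteq> {}}"

fun wff :: "('a, 'p) fm \<Rightarrow> bool" where
  "wff (Atom p) = True"
| "wff Bot = True"
| "wff (And a b) = (wff a \<and> wff b)"
| "wff (Or a b) = (wff a \<and> wff b)"
| "wff (Imp a b) = (wff a \<and> wff b)"
| "wff (Neg a) = wff a"
| "wff (Dbox G a) = (G \<in> Grp \<and> wff a)"

fun outmost_boxed :: "('a, 'p) fm \<Rightarrow> bool" where
  "outmost_boxed (Dbox G a) = True"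
| "outmost_boxed _ = False"

fun atom_or_bot :: "('a, 'p) fm \<Rightarrow> bool" where
  "atom_or_bot (Atom p) = True"
| "atom_or_bot Bot = True"
| "atom_or_bot _ = False"

fun box_group :: "('a, 'p) fm \<Rightarrow> 'a set" where
  "box_group (Dbox G a) = G"
| "box_group _ = {}"

definition T_sequent :: "('a, 'p) fm multiset \<Rightarrow> ('a, 'p) fm multiset \<Rightarrow> ('a, 'p) fm multiset \<Rightarrow> bool" where
  "T_sequent S \<Gamma> \<Delta> \<longleftrightarrow> (\<forall>x\<in>#S. outmost_boxed x \<and> wff x) \<and> (\<forall>x\<in>#\<Gamma>. wff x) \<and> (\<forall>x\<in>#\<Delta>. wff x)"

text \<open>Derivability in G(KT+_D): derives S Gamma Delta means  |- S | Gamma => Delta.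
In rule D_K, the boxed premises D_{G_i} alpha_i are given as a list of pairs (G_i, alpha_i).\<close>
inductive derives :: "('a, 'p) fm multiset \<Rightarrow> ('a, 'p) fm multiset \<Rightarrow> ('a, 'p) fm multiset \<Rightarrow> bool" where
  init_atom: "T_sequent S (add_mset (Atom p) \<Gamma>) (add_mset (Atom p) \<Delta>) \<Longrightarrow>
     derives S (add_mset (Atom p) \<Gamma>) (add_mset (Atom p) \<Delta>)"
| init_bot: "T_sequent S (add_mset Bot \<Gamma>) \<Delta> \<Longrightarrow> derives S (add_mset Bot \<Gamma>) \<Delta>"
| R_and: "derives S \<Gamma> (add_mset a1 \<Delta>) \<Longrightarrow> derives S \<Gamma> (add_mset a2 \<Delta>) \<Longrightarrow>
     derives S \<Gamma> (add_mset (And a1 a2) \<Delta>)"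
| L_and: "derives S (add_mset a1 (add_mset a2 \<Gamma>)) \<Delta> \<Longrightarrow> derives S (add_mset (And a1 a2) \<Gamma>) \<Delta>"
| R_or: "derives S \<Gamma> (add_mset a1 (add_mset a2 \<Delta>)) \<Longrightarrow> derives S \<Gamma> (add_mset (Or a1 a2) \<Delta>)"
| L_or: "derives S (add_mset a1 \<Gamma>) \<Delta> \<Longrightarrow> derives S (add_mset a2 \<Gamma>) \<Delta> \<Longrightarrow>
     derives S (add_mset (Or a1 a2) \<Gamma>) \<Delta>"
| R_imp: "derives S (add_mset a1 \<Gamma>) (add_mset a2 \<Delta>) \<Longrightarrow> derives S \<Gamma> (add_mset (Imp a1 a2) \<Delta>)"
| L_imp: "derives S \<Gamma> (add_mset a1 \<Delta>) \<Longrightarrow> derives S (add_mset a2 \<Gamma>) \<Delta> \<Longrightarrow>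
     derives S (add_mset (Imp a1 a2) \<Gamma>) \<Delta>"
| R_neg: "derives S (add_mset a \<Gamma>) \<Delta> \<Longrightarrow> derives S \<Gamma> (add_mset (Neg a) \<Delta>)"
| L_neg: "derives S \<Gamma> (add_mset a \<Delta>) \<Longrightarrow> derives S (add_mset (Neg a) \<Gamma>) \<Delta>"
| D_K: "derives {#} (mset (map snd bs)) {#b#} \<Longrightarrow>
     (\<forall>(Gi, ai) \<in> set bs. Gi \<subseteq> G) \<Longrightarrow>
     (\<forall>x\<in>#S. outmost_boxed x \<and> \<not> box_group x \<subseteq> G) \<Longrightarrow>
     (\<forall>x\<in>#\<Pi>. atom_or_bot x) \<Longrightarrow>
     (\<forall>x\<in>#\<Omega>. atom_or_bot x \<or> outmost_boxed x) \<Longrightarrow>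
     T_sequent (S + mset (map (\<lambda>(Gi, ai). Dbox Gi ai) bs)) \<Pi> (add_mset (Dbox G b) \<Omega>) \<Longrightarrow>
     derives (S + mset (map (\<lambda>(Gi, ai). Dbox Gi ai) bs)) \<Pi> (add_mset (Dbox G b) \<Omega>)"
| D_T: "derives (add_mset (Dbox G a) S) (add_mset a \<Gamma>) \<Delta> \<Longrightarrow>
     derives S (add_mset (Dbox G a) \<Gamma>) \<Delta>"

end

theory Submission
  imports Defs
begin

definition W :: "('a, 'p) fm \<Rightarrow> bool" where
  "W b \<longleftrightarrow> (\<forall>S \<Gamma> \<Delta>. derives S \<Gamma> \<Delta> \<longrightarrow> derives S \<Gamma> (add_mset b \<Delta>) \<and>
     derives S (add_mset b \<Gamma>) \<Delta> \<and> (\<forall>H\<in>Grp. derives (add_mset (Dbox H b) S) \<Gamma> \<Delta>))"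

lemma WR: "W b \<Longrightarrow> derives S \<Gamma> \<Delta> \<Longrightarrow> derives S \<Gamma> (add_mset b \<Delta>)"
  unfolding W_def by blast
lemma WL: "W b \<Longrightarrow> derives S \<Gamma> \<Delta> \<Longrightarrow> derives S (add_mset b \<Gamma>) \<Delta>"
  unfolding W_def by blast
lemma WS: "W b \<Longrightarrow> H \<in> Grp \<Longrightarrow> derives S \<Gamma> \<Delta> \<Longrightarrow> derives (add_mset (Dbox H b) S) \<Gamma> \<Delta>"
  unfolding W_def by blast

lemma decompR:
  fixes \<alpha> :: "('a,'p) fm"
  assumes w: "wff \<alpha>" and IH: "\<And>\<beta>::('a,'p) fm. size \<beta> < size \<alpha> \<Longrightarrow> wff \<beta> \<Longrightarrow> W \<beta>"
    and na: "\<not> atom_or_bot \<alpha>" "\<not> outmost_boxed \<alpha>" and d: "derives S \<Gamma> \<Delta>"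
  shows "derives S \<Gamma> (add_mset \<alpha> \<Delta>)"
proof (cases \<alpha>)
  case (And a1 a2)
  have h: "W a1" "W a2" using IH[of a1] IH[of a2] w And by simp_all
  then show ?thesis using And derives.R_and[OF WR[OF h(1) d] WR[OF h(2) d]] by simp
next
  case (Or a1 a2)
  have h: "W a1" "W a2" using IH[of a1] IH[of a2] w Or by simp_all
  then show ?thesis using Or derives.R_or[OF WR[OF h(1) WR[OF h(2) d]]] by simp
next
  case (Imp a1 a2)
  have h: "W a1" "W a2" using IH[of a1] IH[of a2] w Imp by simp_all
  then show ?thesis using Imp derives.R_imp[OF WR[OF h(2) WL[OF h(1) d]]] by simp
next
  case (Neg a)
  have h: "W a" using IH[of a] w Neg by simp_all
  then show ?thesis using Neg derives.R_neg[OF WL[OF h d]] by simp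
qed (use na in auto)

lemma decompL:
  fixes \<alpha> :: "('a,'p) fm"
  assumes w: "wff \<alpha>" and IH: "\<And>\<beta>::('a,'p) fm. size \<beta> < size \<alpha> \<Longrightarrow> wff \<beta> \<Longrightarrow> W \<beta>"
    and na: "\<not> atom_or_bot \<alpha>" and d: "derives S \<Gamma> \<Delta>"
  shows "derives S (add_mset \<alpha> \<Gamma>) \<Delta>"
proof (cases \<alpha>)
  case (And a1 a2)
  have h: "W a1" "W a2" using IH[of a1] IH[of a2] w And by simp_all
  then show ?thesis using And derives.L_and[OF WL[OF h(1) WL[OF h(2) d]]] by simp
next
  case (Or a1 a2)
  have h: "W a1" "W a2" using IH[of a1] IH[of a2] w Or by simp_all
  then show ?thesis using Or derives.L_or[OF WL[OF h(1) d] WL[OF h(2) d]] by simp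
next
  case (Imp a1 a2)
  have h: "W a1" "W a2" using IH[of a1] IH[of a2] w Imp by simp_all
  then show ?thesis using Imp derives.L_imp[OF WR[OF h(1) d] WL[OF h(2) d]] by simp
next
  case (Neg a)
  have h: "W a" using IH[of a] w Neg by simp_all
  then show ?thesis using Neg derives.L_neg[OF WR[OF h d]] by simp
next
  case (Dbox K a)
  have h: "W a" "K \<in> Grp" using IH[of a] w Dbox by simp_all
  then show ?thesis using Dbox derives.D_T[OF WL[OF h(1) WS[OF h(1) h(2) d]]] by simp
qed (use na in auto)

lemma main:
  fixes \<alpha> :: "('a,'p) fm"
  assumes d: "derives S \<Gamma> \<Delta>" and w: "wff \<alpha>"
    and IH: "\<And>\<beta>::('a,'p) fm. size \<beta> < size \<alpha> \<Longrightarrow> wff \<beta> \<Longrightarrow> W \<beta>"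
  shows "derives S \<Gamma> (add_mset \<alpha> \<Delta>) \<and> derives S (add_mset \<alpha> \<Gamma>) \<Delta> \<and>
    (\<forall>H\<in>Grp. derives (add_mset (Dbox H \<alpha>) S) \<Gamma> \<Delta>)"
  using d
proof (induction rule: derives.induct)
  case (init_atom S p \<Gamma> \<Delta>)
  have t1: "T_sequent S (add_mset (Atom p) \<Gamma>) (add_mset (Atom p) (add_mset \<alpha> \<Delta>))"
    using init_atom w by (auto simp: T_sequent_def)
  have t2: "T_sequent S (add_mset (Atom p) (add_mset \<alpha> \<Gamma>)) (add_mset (Atom p) \<Delta>)"
    using init_atom w by (auto simp: T_sequent_def)
  have t3: "T_sequent (add_mset (Dbox H \<alpha>) S) (add_mset (Atom p) \<Gamma>) (add_mset (Atom p) \<Delta>)"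
    if "H \<in> Grp" for H
    using init_atom w that by (auto simp: T_sequent_def)
  show ?case using derives.init_atom[OF t1] derives.init_atom[OF t2] derives.init_atom[OF t3]
    by (simp add: add_mset_commute)
next
  case (init_bot S \<Gamma> \<Delta>)
  have t1: "T_sequent S (add_mset Bot \<Gamma>) (add_mset \<alpha> \<Delta>)"
    using init_bot w by (auto simp: T_sequent_def)
  have t2: "T_sequent S (add_mset Bot (add_mset \<alpha> \<Gamma>)) \<Delta>"
    using init_bot w by (auto simp: T_sequent_def)
  have t3: "T_sequent (add_mset (Dbox H \<alpha>) S) (add_mset Bot \<Gamma>) \<Delta>"
    if "H \<in> Grp" for H
    using init_bot w that by (auto simp: T_sequent_def)
  show ?case using derives.init_bot[OF t1] derives.init_bot[OF t2] derives.init_bot[OF t3]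
    by (simp add: add_mset_commute)
next
  case (R_and S \<Gamma> a1 \<Delta> a2)
  have 1: "derives S \<Gamma> (add_mset (And a1 a2) (add_mset \<alpha> \<Delta>))"
    by (rule derives.R_and) (use R_and.IH in \<open>simp_all add: add_mset_commute\<close>)
  have 2: "derives S (add_mset \<alpha> \<Gamma>) (add_mset (And a1 a2) \<Delta>)"
    by (rule derives.R_and) (use R_and.IH in \<open>simp_all add: add_mset_commute\<close>)
  have 3: "derives (add_mset (Dbox H \<alpha>) S) \<Gamma> (add_mset (And a1 a2) \<Delta>)" if "H \<in> Grp" for H
    by (rule derives.R_and) (use R_and.IH that in \<open>simp_all add: add_mset_commute\<close>)
  show ?case using 1 2 3 by (simp add: add_mset_commute)
next
  case (L_and S a1 a2 \<Gamma> \<Delta>)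
  have 1: "derives S (add_mset (And a1 a2) \<Gamma>) (add_mset \<alpha> \<Delta>)"
    by (rule derives.L_and) (use L_and.IH in \<open>simp_all add: add_mset_commute\<close>)
  have 2: "derives S (add_mset (And a1 a2) (add_mset \<alpha> \<Gamma>)) \<Delta>"
    by (rule derives.L_and) (use L_and.IH in \<open>simp_all add: add_mset_commute\<close>)
  have 3: "derives (add_mset (Dbox H \<alpha>) S) (add_mset (And a1 a2) \<Gamma>) \<Delta>" if "H \<in> Grp" for H
    by (rule derives.L_and) (use L_and.IH that in \<open>simp_all add: add_mset_commute\<close>)
  show ?case using 1 2 3 by (simp add: add_mset_commute)
next
  case (R_or S \<Gamma> a1 a2 \<Delta>)
  have 1: "derives S \<Gamma> (add_mset (Or a1 a2) (add_mset \<alpha> \<Delta>))"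
    by (rule derives.R_or) (use R_or.IH in \<open>simp_all add: add_mset_commute\<close>)
  have 2: "derives S (add_mset \<alpha> \<Gamma>) (add_mset (Or a1 a2) \<Delta>)"
    by (rule derives.R_or) (use R_or.IH in \<open>simp_all add: add_mset_commute\<close>)
  have 3: "derives (add_mset (Dbox H \<alpha>) S) \<Gamma> (add_mset (Or a1 a2) \<Delta>)" if "H \<in> Grp" for H
    by (rule derives.R_or) (use R_or.IH that in \<open>simp_all add: add_mset_commute\<close>)
  show ?case using 1 2 3 by (simp add: add_mset_commute)
next
  case (L_or S a1 \<Gamma> \<Delta> a2)
  have 1: "derives S (add_mset (Or a1 a2) \<Gamma>) (add_mset \<alpha> \<Delta>)"
    by (rule derives.L_or) (use L_or.IH in \<open>simp_all add: add_mset_commute\<close>)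
  have 2: "derives S (add_mset (Or a1 a2) (add_mset \<alpha> \<Gamma>)) \<Delta>"
    by (rule derives.L_or) (use L_or.IH in \<open>simp_all add: add_mset_commute\<close>)
  have 3: "derives (add_mset (Dbox H \<alpha>) S) (add_mset (Or a1 a2) \<Gamma>) \<Delta>" if "H \<in> Grp" for H
    by (rule derives.L_or) (use L_or.IH that in \<open>simp_all add: add_mset_commute\<close>)
  show ?case using 1 2 3 by (simp add: add_mset_commute)
next
  case (R_imp S a1 \<Gamma> a2 \<Delta>)
  have 1: "derives S \<Gamma> (add_mset (Imp a1 a2) (add_mset \<alpha> \<Delta>))"
    by (rule derives.R_imp) (use R_imp.IH in \<open>simp_all add: add_mset_commute\<close>)
  have 2: "derives S (add_mset \<alpha> \<Gamma>) (add_mset (Imp a1 a2) \<Delta>)"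
    by (rule derives.R_imp) (use R_imp.IH in \<open>simp_all add: add_mset_commute\<close>)
  have 3: "derives (add_mset (Dbox H \<alpha>) S) \<Gamma> (add_mset (Imp a1 a2) \<Delta>)" if "H \<in> Grp" for H
    by (rule derives.R_imp) (use R_imp.IH that in \<open>simp_all add: add_mset_commute\<close>)
  show ?case using 1 2 3 by (simp add: add_mset_commute)
next
  case (L_imp S \<Gamma> a1 \<Delta> a2)
  have 1: "derives S (add_mset (Imp a1 a2) \<Gamma>) (add_mset \<alpha> \<Delta>)"
    by (rule derives.L_imp) (use L_imp.IH in \<open>simp_all add: add_mset_commute\<close>)
  have 2: "derives S (add_mset (Imp a1 a2) (add_mset \<alpha> \<Gamma>)) \<Delta>"
    by (rule derives.L_imp) (use L_imp.IH in \<open>simp_all add: add_mset_commute\<close>)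
  have 3: "derives (add_mset (Dbox H \<alpha>) S) (add_mset (Imp a1 a2) \<Gamma>) \<Delta>" if "H \<in> Grp" for H
    by (rule derives.L_imp) (use L_imp.IH that in \<open>simp_all add: add_mset_commute\<close>)
  show ?case using 1 2 3 by (simp add: add_mset_commute)
next
  case (R_neg S a \<Gamma> \<Delta>)
  have 1: "derives S \<Gamma> (add_mset (Neg a) (add_mset \<alpha> \<Delta>))"
    by (rule derives.R_neg) (use R_neg.IH in \<open>simp_all add: add_mset_commute\<close>)
  have 2: "derives S (add_mset \<alpha> \<Gamma>) (add_mset (Neg a) \<Delta>)"
    by (rule derives.R_neg) (use R_neg.IH in \<open>simp_all add: add_mset_commute\<close>)
  have 3: "derives (add_mset (Dbox H \<alpha>) S) \<Gamma> (add_mset (Neg a) \<Delta>)" if "H \<in> Grp" for H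
    by (rule derives.R_neg) (use R_neg.IH that in \<open>simp_all add: add_mset_commute\<close>)
  show ?case using 1 2 3 by (simp add: add_mset_commute)
next
  case (L_neg S \<Gamma> a \<Delta>)
  have 1: "derives S (add_mset (Neg a) \<Gamma>) (add_mset \<alpha> \<Delta>)"
    by (rule derives.L_neg) (use L_neg.IH in \<open>simp_all add: add_mset_commute\<close>)
  have 2: "derives S (add_mset (Neg a) (add_mset \<alpha> \<Gamma>)) \<Delta>"
    by (rule derives.L_neg) (use L_neg.IH in \<open>simp_all add: add_mset_commute\<close>)
  have 3: "derives (add_mset (Dbox H \<alpha>) S) (add_mset (Neg a) \<Gamma>) \<Delta>" if "H \<in> Grp" for H
    by (rule derives.L_neg) (use L_neg.IH that in \<open>simp_all add: add_mset_commute\<close>)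
  show ?case using 1 2 3 by (simp add: add_mset_commute)
next
  case (D_T G a S \<Gamma> \<Delta>)
  have 1: "derives S (add_mset (Dbox G a) \<Gamma>) (add_mset \<alpha> \<Delta>)"
    by (rule derives.D_T) (use D_T.IH in \<open>simp_all add: add_mset_commute\<close>)
  have 2: "derives S (add_mset (Dbox G a) (add_mset \<alpha> \<Gamma>)) \<Delta>"
    by (rule derives.D_T) (use D_T.IH in \<open>simp_all add: add_mset_commute\<close>)
  have 3: "derives (add_mset (Dbox H \<alpha>) S) (add_mset (Dbox G a) \<Gamma>) \<Delta>" if "H \<in> Grp" for H
  proof (rule derives.D_T)
    have "derives (add_mset (Dbox H \<alpha>) (add_mset (Dbox G a) S)) (add_mset a \<Gamma>) \<Delta>"
      using D_T.IH that by blast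
    then show "derives (add_mset (Dbox G a) (add_mset (Dbox H \<alpha>) S)) (add_mset a \<Gamma>) \<Delta>"
      by (simp add: add_mset_commute)
  qed
  show ?case using 1 2 3 by (simp add: add_mset_commute)
next
  case (D_K bs b G S \<Pi> \<Omega>)
  let ?Sg = "S + mset (map (\<lambda>(Gi, ai). Dbox Gi ai) bs)"
  have dd: "derives ?Sg \<Pi> (add_mset (Dbox G b) \<Omega>)"
    using D_K by (intro derives.D_K) auto
  have r: "derives ?Sg \<Pi> (add_mset \<alpha> (add_mset (Dbox G b) \<Omega>))"
  proof (cases "atom_or_bot \<alpha> \<or> outmost_boxed \<alpha>")
    case True
    have "derives ?Sg \<Pi> (add_mset (Dbox G b) (add_mset \<alpha> \<Omega>))"
      using D_K True w by (intro derives.D_K) (auto simp: T_sequent_def)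
    then show ?thesis by (simp add: add_mset_commute)
  next
    case False
    then show ?thesis using decompR[OF w IH _ _ dd] by auto
  qed
  have l: "derives ?Sg (add_mset \<alpha> \<Pi>) (add_mset (Dbox G b) \<Omega>)"
  proof (cases "atom_or_bot \<alpha>")
    case True
    show ?thesis
      using D_K True w by (intro derives.D_K) (auto simp: T_sequent_def)
  next
    case False
    then show ?thesis using decompL[OF w IH _ dd] by auto
  qed
  have s: "derives (add_mset (Dbox H \<alpha>) ?Sg) \<Pi> (add_mset (Dbox G b) \<Omega>)" if H: "H \<in> Grp" for H
  proof (cases "H \<subseteq> G")
    case True
    have p: "derives {#} (mset (map snd (bs @ [(H, \<alpha>)]))) {#b#}"
      using D_K.IH by (simp add: add_mset_commute)
    have "derives (S + mset (map (\<lambda>(Gi, ai). Dbox Gi ai) (bs @ [(H, \<alpha>)]))) \<Pi> (add_mset (Dbox G b) \<Omega>)"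
      using D_K True w H by (intro derives.D_K[OF p]) (auto simp: T_sequent_def)
    then show ?thesis by simp
  next
    case False
    have "derives (add_mset (Dbox H \<alpha>) S + mset (map (\<lambda>(Gi, ai). Dbox Gi ai) bs)) \<Pi> (add_mset (Dbox G b) \<Omega>)"
      using D_K False w H by (intro derives.D_K) (auto simp: T_sequent_def)
    then show ?thesis by simp
  qed
  show ?case using r l s by blast
qed

lemma allW: "wff (\<alpha>::('a,'p) fm) \<Longrightarrow> W \<alpha>"
proof (induction "size \<alpha>" arbitrary: \<alpha> rule: less_induct)
  case less
  show ?case unfolding W_def using main[OF _ less.prems less.hyps] by blast
qed

theorem proposition6p8:
  fixes S \<Gamma> \<Delta> :: "('a::finite, 'p) fm multiset" and \<alpha> :: "('a, 'p) fm" and G :: "'a set"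
  assumes "T_sequent S \<Gamma> \<Delta>" and "wff \<alpha>" and "G \<in> Grp"
    and "derives S \<Gamma> \<Delta>"
  shows "derives S \<Gamma> (add_mset \<alpha> \<Delta>) \<and>
         derives S (add_mset \<alpha> \<Gamma>) \<Delta> \<and>
         derives (add_mset (Dbox G \<alpha>) S) \<Gamma> \<Delta>"
  using allW[OF assms(2)] assms(3,4) unfolding W_def by blast

end
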